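(* Let $\mathcal{X}$ be a projective, nonsingular, geometrically irreducible curve of genus $g$ over $\mathbb{F}_q$. Let $\mathcal{P}$ be a proper subset of $\mathcal{X}(\mathbb{F}_q)$ and $D=\sum_{P\in\mathcal{P}}P$. Let $G,H,J$ be divisors on $\mathcal{X}$ of degree at most $\deg(D)-1$ with $(\mathrm{supp}(G)\cup\mathrm{supp}(H)\cup\mathrm{supp}(J))\cap\mathrm{supp}(D)=\varnothing$. For each nonzero $f\in\mathscr{L}(J)$ let $H_f=H-(f)$. If \[ \mathscr{L}(\mathrm{lcm}(G,H_f)-D)\cap\big(\mathscr{L}(G)+\mathscr{L}(H_f)\big)=\{0\}\quad\text{for all nonzero }f\in\mathscr{L}(J), \] then $C(D,G)\cap C(D,H_f)=C(D,\gcd(G,H_f))$ (for every nonzero $f\in\mathscr{L}(J)$).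
   Context: $(f)$ is the principal divisor of a nonzero function $f$; $\gcd$ and $\mathrm{lcm}$ of divisors are taken coefficientwise (min and max of coefficients). $\mathscr{L}(E)=\{f\in\mathbb{F}_q(\mathcal{X})^*:(f)+E\ge0\}\cup\{0\}$, and $\mathscr{L}(G)+\mathscr{L}(H_f)$ is the sum of subspaces of the function field. Writing $D=P_1+\dots+P_n$, for a divisor $E$ such that every function in $\mathscr{L}(E)$ is regular at all points of $\mathrm{supp}(D)$, $C(D,E)=\{(f(P_1),\dots,f(P_n)):f\in\mathscr{L}(E)\}\subseteq\mathbb{F}_q^n$ (this applies to $G$, $H_f$ and $\gcd(G,H_f)$ here, since $\mathscr{L}(H_f)=f\mathscr{L}(H)$). *)

theory Defs
  imports "HOL-Computational_Algebra.Polynomial"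
begin

text \<open>
  The field of rational functions of the curve is the ambient type 'k (a field),
  and F_q is a finite subfield Fq of it.  Points of the curve correspond to places,
  represented by their normalized discrete valuations v : 'k \<Rightarrow> int
  (value on 0 conventionally 0, standing for +infinity).
\<close>

definition subfield :: "'k::field set \<Rightarrow> bool" where
  "subfield F \<longleftrightarrow> 0 \<in> F \<and> 1 \<in> F \<and> (\<forall>a\<in>F. \<forall>b\<in>F. a + b \<in> F \<and> a * b \<in> F)
     \<and> (\<forall>a\<in>F. - a \<in> F \<and> inverse a \<in> F)"

definition poly_over :: "'k::field set \<Rightarrow> 'k poly \<Rightarrow> bool" where
  "poly_over F p \<longleftrightarrow> (\<forall>i. coeff p i \<in> F)"

definition algebraic_over :: "'k::field set \<Rightarrow> 'k \<Rightarrow> bool" where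
  "algebraic_over F y \<longleftrightarrow> (\<exists>p. p \<noteq> 0 \<and> poly_over F p \<and> poly p y = 0)"

definition rat_fun_field :: "'k::field set \<Rightarrow> 'k \<Rightarrow> 'k set" where
  "rat_fun_field F x = {poly p x / poly r x | p r. poly_over F p \<and> poly_over F r \<and> poly r x \<noteq> 0}"

text \<open>'k is an algebraic function field of one variable over the finite field Fq with full
  constant field Fq (geometric irreducibility; separability is automatic since Fq is perfect).\<close>
definition function_field :: "'k::field set \<Rightarrow> bool" where
  "function_field Fq \<longleftrightarrow> subfield Fq \<and> finite Fq \<and>
     (\<exists>x. \<not> algebraic_over Fq x \<and>
        (\<exists>B. finite B \<and> (\<forall>y. \<exists>c. (\<forall>b\<in>B. c b \<in> rat_fun_field Fq x) \<and> y = (\<Sum>b\<in>B. c b * b)))) \<and>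
     (\<forall>y. algebraic_over Fq y \<longrightarrow> y \<in> Fq)"

definition place :: "'k::field set \<Rightarrow> ('k \<Rightarrow> int) \<Rightarrow> bool" where
  "place Fq v \<longleftrightarrow> v 0 = 0 \<and>
     (\<forall>x y. x \<noteq> 0 \<longrightarrow> y \<noteq> 0 \<longrightarrow> v (x * y) = v x + v y) \<and>
     (\<forall>x y. x \<noteq> 0 \<longrightarrow> y \<noteq> 0 \<longrightarrow> x + y \<noteq> 0 \<longrightarrow> v (x + y) \<ge> min (v x) (v y)) \<and>
     (\<forall>c\<in>Fq. c \<noteq> 0 \<longrightarrow> v c = 0) \<and>
     surj v"

definition places :: "'k::field set \<Rightarrow> ('k \<Rightarrow> int) set" where
  "places Fq = {v. place Fq v}"

text \<open>Valuation ring and "x is in the maximal ideal" (0 has valuation +infinity).\<close>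
definition regular_at :: "('k::field \<Rightarrow> int) \<Rightarrow> 'k \<Rightarrow> bool" where
  "regular_at v x \<longleftrightarrow> x = 0 \<or> v x \<ge> 0"

definition vanishes_at :: "('k::field \<Rightarrow> int) \<Rightarrow> 'k \<Rightarrow> bool" where
  "vanishes_at v x \<longleftrightarrow> x = 0 \<or> v x > 0"

definition residue_field :: "('k::field \<Rightarrow> int) \<Rightarrow> 'k set set" where
  "residue_field v = {x. regular_at v x} //
      {(x, y). regular_at v x \<and> regular_at v y \<and> vanishes_at v (x - y)}"

text \<open>Degree of a place: [residue field : Fq], i.e. card(residue field) = q^deg.\<close>
definition place_deg :: "'k::field set \<Rightarrow> ('k \<Rightarrow> int) \<Rightarrow> nat" where
  "place_deg Fq v = (THE n. card (residue_field v) = card Fq ^ n)"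

text \<open>Rational places (degree one places) = points of X(F_q).\<close>
definition rational_places :: "'k::field set \<Rightarrow> ('k \<Rightarrow> int) set" where
  "rational_places Fq = {v \<in> places Fq. place_deg Fq v = 1}"

definition eval_at :: "'k::field set \<Rightarrow> ('k \<Rightarrow> int) \<Rightarrow> 'k \<Rightarrow> 'k" where
  "eval_at Fq v f = (SOME c. c \<in> Fq \<and> vanishes_at v (f - c))"

type_synonym 'k divisor = "('k \<Rightarrow> int) \<Rightarrow> int"

definition is_divisor :: "'k::field set \<Rightarrow> 'k divisor \<Rightarrow> bool" where
  "is_divisor Fq E \<longleftrightarrow> finite {v. E v \<noteq> 0} \<and> {v. E v \<noteq> 0} \<subseteq> places Fq"

definition div_supp :: "'k::field divisor \<Rightarrow> ('k \<Rightarrow> int) set" where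
  "div_supp E = {v. E v \<noteq> 0}"

definition div_deg :: "'k::field set \<Rightarrow> 'k divisor \<Rightarrow> int" where
  "div_deg Fq E = (\<Sum>v\<in>div_supp E. E v * int (place_deg Fq v))"

definition principal_div :: "'k::field set \<Rightarrow> 'k \<Rightarrow> 'k divisor" where
  "principal_div Fq f = (\<lambda>v. if place Fq v then v f else 0)"

definition div_gcd :: "'k::field divisor \<Rightarrow> 'k divisor \<Rightarrow> 'k divisor" where
  "div_gcd E F = (\<lambda>v. min (E v) (F v))"

definition div_lcm :: "'k::field divisor \<Rightarrow> 'k divisor \<Rightarrow> 'k divisor" where
  "div_lcm E F = (\<lambda>v. max (E v) (F v))"

definition RR_space :: "'k::field set \<Rightarrow> 'k divisor \<Rightarrow> 'k set" where
  "RR_space Fq E = {f. f = 0 \<or> (\<forall>v. principal_div Fq f v + E v \<ge> 0)}"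

text \<open>Algebraic geometry code C(D,E), D = sum of the places in Pset; codewords are
  indexed by the places of Pset (the ordering P_1,...,P_n is immaterial here).\<close>
definition AG_code :: "'k::field set \<Rightarrow> ('k \<Rightarrow> int) set \<Rightarrow> 'k divisor \<Rightarrow> (('k \<Rightarrow> int) \<Rightarrow> 'k) set" where
  "AG_code Fq Pset E = {(\<lambda>P. if P \<in> Pset then eval_at Fq P f else 0) | f. f \<in> RR_space Fq E}"

definition sum_div :: "('k::field \<Rightarrow> int) set \<Rightarrow> 'k divisor" where
  "sum_div Pset = (\<lambda>v. if v \<in> Pset then 1 else 0)"

end

theory Submission
  imports Defs "HOL-Library.FuncSet"
begin

lemma sf_0: "subfield F \<Longrightarrow> 0 \<in> F" by (simp add: subfield_def)
lemma sf_1: "subfield F \<Longrightarrow> 1 \<in> F" by (simp add: subfield_def)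
lemma sf_add: "subfield F \<Longrightarrow> a \<in> F \<Longrightarrow> b \<in> F \<Longrightarrow> a + b \<in> F" by (simp add: subfield_def)
lemma sf_mult: "subfield F \<Longrightarrow> a \<in> F \<Longrightarrow> b \<in> F \<Longrightarrow> a * b \<in> F" by (simp add: subfield_def)
lemma sf_uminus: "subfield F \<Longrightarrow> a \<in> F \<Longrightarrow> - a \<in> F" by (simp add: subfield_def)
lemma sf_inverse: "subfield F \<Longrightarrow> a \<in> F \<Longrightarrow> inverse a \<in> F" by (simp add: subfield_def)
lemma sf_diff: "subfield F \<Longrightarrow> a \<in> F \<Longrightarrow> b \<in> F \<Longrightarrow> a - b \<in> F"
  using sf_add[of F a "-b"] sf_uminus[of F b] by simp
lemma sf_divide: "subfield F \<Longrightarrow> a \<in> F \<Longrightarrow> b \<in> F \<Longrightarrow> a / b \<in> F"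
  using sf_mult[of F a "inverse b"] sf_inverse[of F b] by (simp add: divide_inverse)
lemma sf_sum: "subfield F \<Longrightarrow> (\<And>i. i \<in> S \<Longrightarrow> f i \<in> F) \<Longrightarrow> sum f S \<in> F"
  by (induction S rule: infinite_finite_induct) (auto simp: sf_0 sf_add)
lemma sf_power: "subfield F \<Longrightarrow> a \<in> F \<Longrightarrow> a ^ n \<in> F"
  by (induction n) (auto simp: sf_1 sf_mult)

lemma po_0[simp]: "poly_over F 0" if "subfield F" using that by (simp add: poly_over_def sf_0)
lemma po_const: "subfield F \<Longrightarrow> c \<in> F \<Longrightarrow> poly_over F [:c:]"
  by (auto simp: poly_over_def coeff_pCons split: nat.splits intro: sf_0)
lemma po_pCons: "poly_over F (pCons a p) \<longleftrightarrow> a \<in> F \<and> poly_over F p"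
  by (auto simp: poly_over_def coeff_pCons split: nat.splits)
lemma po_add: "subfield F \<Longrightarrow> poly_over F p \<Longrightarrow> poly_over F q \<Longrightarrow> poly_over F (p + q)"
  by (simp add: poly_over_def sf_add)
lemma po_uminus: "subfield F \<Longrightarrow> poly_over F p \<Longrightarrow> poly_over F (- p)"
  by (simp add: poly_over_def sf_uminus)
lemma po_diff: "subfield F \<Longrightarrow> poly_over F p \<Longrightarrow> poly_over F q \<Longrightarrow> poly_over F (p - q)"
  by (simp add: poly_over_def sf_diff)
lemma po_mult: "subfield F \<Longrightarrow> poly_over F p \<Longrightarrow> poly_over F q \<Longrightarrow> poly_over F (p * q)"
  by (simp add: poly_over_def coeff_mult sf_sum sf_mult)
lemma po_monom: "subfield F \<Longrightarrow> c \<in> F \<Longrightarrow> poly_over F (monom c n)"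
  by (simp add: poly_over_def coeff_monom sf_0)
lemma po_pow: "subfield F \<Longrightarrow> poly_over F p \<Longrightarrow> poly_over F (p ^ n)"
  by (induction n) (auto simp: po_mult po_const[of F 1] sf_1 one_pCons)
lemma po_lead: "poly_over F p \<Longrightarrow> lead_coeff p \<in> F"
  by (simp add: poly_over_def)
lemma po_reflect: "subfield F \<Longrightarrow> poly_over F p \<Longrightarrow> poly_over F (reflect_poly p)"
  by (simp add: poly_over_def coeff_reflect_poly sf_0)

lemma po_finite:
  assumes "finite F"
  shows "finite {q. poly_over F q \<and> degree q < d}"
proof -
  let ?Q = "{q. poly_over F q \<and> degree q < d}"
  have "inj_on (\<lambda>q. restrict (coeff q) {..<d}) ?Q"
  proof (rule inj_onI)
    fix p q assume p: "p \<in> ?Q" and q: "q \<in> ?Q" and e: "restrict (coeff p) {..<d} = restrict (coeff q) {..<d}"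
    show "p = q"
    proof (rule poly_eqI)
      fix n show "coeff p n = coeff q n"
      proof (cases "n < d")
        case True then show ?thesis using fun_cong[OF e, of n] by simp
      next
        case False then show ?thesis using p q by (simp add: coeff_eq_0)
      qed
    qed
  qed
  moreover have "(\<lambda>q. restrict (coeff q) {..<d}) ` ?Q \<subseteq> (\<Pi>\<^sub>E i\<in>{..<d}. F)"
    by (auto simp: poly_over_def PiE_def extensional_def)
  moreover have "finite (\<Pi>\<^sub>E i\<in>{..<d}. F)" using assms by (simp add: finite_PiE)
  ultimately show ?thesis using finite_imageD finite_subset by blast
qed

locale vp =
  fixes Fq :: "'k::field set" and v :: "'k \<Rightarrow> int"
  assumes sf: "subfield Fq" and pl: "place Fq v"
begin

lemma v0[simp]: "v 0 = 0" using pl by (simp add: place_def)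
lemma v_mult: "x \<noteq> 0 \<Longrightarrow> y \<noteq> 0 \<Longrightarrow> v (x * y) = v x + v y" using pl by (simp add: place_def)
lemma v_add: "x \<noteq> 0 \<Longrightarrow> y \<noteq> 0 \<Longrightarrow> x + y \<noteq> 0 \<Longrightarrow> v (x + y) \<ge> min (v x) (v y)"
  using pl by (simp add: place_def)
lemma v_const: "c \<in> Fq \<Longrightarrow> c \<noteq> 0 \<Longrightarrow> v c = 0" using pl by (simp add: place_def)
lemma v_surj: "surj v" using pl by (simp add: place_def)
lemma v1[simp]: "v 1 = 0" using v_mult[of 1 1] by simp
lemma vm1[simp]: "v (-1) = 0" using v_mult[of "-1" "-1"] by simp
lemma v_uminus[simp]: "v (- x) = v x"
  by (cases "x = 0") (use v_mult[of "-1" x] in auto)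
lemma v_inverse: "v (inverse x) = - v x"
  by (cases "x = 0") (use v_mult[of x "inverse x"] in auto)
lemma v_divide: "x \<noteq> 0 \<Longrightarrow> y \<noteq> 0 \<Longrightarrow> v (x / y) = v x - v y"
  by (simp add: divide_inverse v_mult v_inverse)
lemma v_power: "x \<noteq> 0 \<Longrightarrow> v (x ^ n) = int n * v x"
  by (induction n) (auto simp: v_mult algebra_simps)

lemma v_strict:
  assumes "x \<noteq> 0" "y \<noteq> 0" "v x < v y"
  shows "x + y \<noteq> 0 \<and> v (x + y) = v x"
proof
  show ne: "x + y \<noteq> 0"
  proof
    assume "x + y = 0" then have "y = - x" by (simp add: eq_neg_iff_add_eq_0 add.commute)
    then show False using assms by simp
  qed
  have "v (x + y) \<ge> v x" using v_add[OF assms(1,2) ne] assms by simp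
  moreover have "v x \<ge> min (v (x + y)) (v (- y))"
    using v_add[of "x + y" "- y"] ne assms by simp
  ultimately show "v (x + y) = v x" using assms by auto
qed

lemma regular_at_0[simp]: "regular_at v 0" by (simp add: regular_at_def)
lemma vanishes_at_0[simp]: "vanishes_at v 0" by (simp add: vanishes_at_def)
lemma van_reg: "vanishes_at v a \<Longrightarrow> regular_at v a" by (auto simp: vanishes_at_def regular_at_def)

lemma reg_add: "regular_at v a \<Longrightarrow> regular_at v b \<Longrightarrow> regular_at v (a + b)"
  unfolding regular_at_def
  by (cases "a = 0"; cases "b = 0"; cases "a + b = 0") (use v_add[of a b] in auto)
lemma reg_uminus: "regular_at v a \<Longrightarrow> regular_at v (- a)"
  by (auto simp: regular_at_def)
lemma reg_diff: "regular_at v a \<Longrightarrow> regular_at v b \<Longrightarrow> regular_at v (a - b)"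
  using reg_add[of a "-b"] reg_uminus[of b] by simp
lemma reg_mult: "regular_at v a \<Longrightarrow> regular_at v b \<Longrightarrow> regular_at v (a * b)"
  unfolding regular_at_def by (cases "a = 0"; cases "b = 0") (auto simp: v_mult)
lemma reg_const: "c \<in> Fq \<Longrightarrow> regular_at v c"
  unfolding regular_at_def by (cases "c = 0") (auto simp: v_const)
lemma reg_sum: "(\<And>i. i \<in> S \<Longrightarrow> regular_at v (f i)) \<Longrightarrow> regular_at v (sum f S)"
  by (induction S rule: infinite_finite_induct) (auto intro: reg_add)
lemma reg_power: "regular_at v a \<Longrightarrow> regular_at v (a ^ n)"
proof (induction n)
  case 0 then show ?case by (simp add: regular_at_def)
next
  case (Suc n) then show ?case using reg_mult[of a "a ^ n"] by simp
qed

lemma van_add: "vanishes_at v a \<Longrightarrow> vanishes_at v b \<Longrightarrow> vanishes_at v (a + b)"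
  unfolding vanishes_at_def
  by (cases "a = 0"; cases "b = 0"; cases "a + b = 0") (use v_add[of a b] in auto)
lemma van_uminus: "vanishes_at v a \<Longrightarrow> vanishes_at v (- a)"
  by (auto simp: vanishes_at_def)
lemma van_diff: "vanishes_at v a \<Longrightarrow> vanishes_at v b \<Longrightarrow> vanishes_at v (a - b)"
  using van_add[of a "-b"] van_uminus[of b] by simp
lemma van_mult: "regular_at v a \<Longrightarrow> vanishes_at v b \<Longrightarrow> vanishes_at v (a * b)"
  unfolding regular_at_def vanishes_at_def by (cases "a = 0"; cases "b = 0") (auto simp: v_mult)
lemma van_mult2: "vanishes_at v a \<Longrightarrow> regular_at v b \<Longrightarrow> vanishes_at v (a * b)"
  using van_mult[of b a] by (simp add: mult.commute)
lemma van_sum: "(\<And>i. i \<in> S \<Longrightarrow> vanishes_at v (f i)) \<Longrightarrow> vanishes_at v (sum f S)"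
  by (induction S rule: infinite_finite_induct) (auto intro: van_add)
lemma van_const: "c \<in> Fq \<Longrightarrow> vanishes_at v c \<Longrightarrow> c = 0"
  unfolding vanishes_at_def by (cases "c = 0") (auto simp: v_const)
lemma van_1[simp]: "\<not> vanishes_at v 1" by (simp add: vanishes_at_def)

lemma unit_inv:
  assumes "regular_at v a" "\<not> vanishes_at v a"
  shows "a \<noteq> 0" "v a = 0" "regular_at v (inverse a)" "\<not> vanishes_at v (inverse a)"
  using assms by (auto simp: regular_at_def vanishes_at_def v_inverse)

lemma cong_trans: "vanishes_at v (a - b) \<Longrightarrow> vanishes_at v (b - c) \<Longrightarrow> vanishes_at v (a - c)"
  using van_add[of "a - b" "b - c"] by simp

lemma distinct_val_sum:
  assumes "finite S" "S \<noteq> {}" "\<And>i. i \<in> S \<Longrightarrow> f i \<noteq> 0" "inj_on (\<lambda>i. v (f i)) S"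
  shows "sum f S \<noteq> 0 \<and> v (sum f S) = Min ((\<lambda>i. v (f i)) ` S)"
  using assms
proof (induction S rule: finite_ne_induct)
  case (singleton x) then show ?case by simp
next
  case (insert i S)
  have IH: "sum f S \<noteq> 0 \<and> v (sum f S) = Min ((\<lambda>i. v (f i)) ` S)"
    using insert by (auto intro: inj_on_subset)
  obtain j where j: "j \<in> S" "Min ((\<lambda>i. v (f i)) ` S) = v (f j)"
    using Min_in[of "(\<lambda>i. v (f i)) ` S"] insert by (metis (no_types, lifting) finite_imageI image_iff image_is_empty)
  have "v (f i) \<noteq> v (f j)" using insert j by (metis inj_on_contraD insertCI)
  then have ne: "v (f i) \<noteq> v (sum f S)" using IH j by simp
  have fi: "f i \<noteq> 0" using insert by simp
  have "f i + sum f S \<noteq> 0 \<and> v (f i + sum f S) = min (v (f i)) (v (sum f S))"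
  proof (cases "v (f i) < v (sum f S)")
    case True then show ?thesis using v_strict[OF fi] IH by auto
  next
    case False then have "v (sum f S) < v (f i)" using ne by simp
    then show ?thesis using v_strict[of "sum f S" "f i"] IH fi by (auto simp: add.commute)
  qed
  then show ?case using insert IH by (simp add: Min_insert)
qed

end

lemma dep_core:
  assumes K: "subfield K" and B: "finite B"
  shows "finite I \<Longrightarrow> card I > card B \<Longrightarrow> (\<forall>i\<in>I. \<forall>b\<in>B. w i b \<in> K) \<Longrightarrow>
    \<exists>\<mu>. (\<forall>i\<in>I. \<mu> i \<in> K) \<and> (\<exists>i\<in>I. \<mu> i \<noteq> 0) \<and> (\<forall>b\<in>B. (\<Sum>i\<in>I. \<mu> i * w i b) = 0)"
  using B
proof (induction B arbitrary: I w rule: finite_induct)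
  case empty
  then obtain i where "i \<in> I" by fastforce
  then show ?case by (intro exI[of _ "\<lambda>_. 1"]) (auto simp: sf_1[OF K])
next
  case (insert b0 B)
  show ?case
  proof (cases "\<forall>i\<in>I. w i b0 = 0")
    case True
    have "card I > card B" using insert by simp
    then obtain \<mu> where mu: "\<forall>i\<in>I. \<mu> i \<in> K" "\<exists>i\<in>I. \<mu> i \<noteq> 0" "\<forall>b\<in>B. (\<Sum>i\<in>I. \<mu> i * w i b) = 0"
      using insert.IH[of I w] insert.prems by auto
    then show ?thesis using True by (intro exI[of _ \<mu>]) auto
  next
    case False
    then obtain i0 where i0: "i0 \<in> I" "w i0 b0 \<noteq> 0" by auto
    define I' where "I' = I - {i0}"
    define w' where "w' i b = w i b - (w i b0 / w i0 b0) * w i0 b" for i b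
    have cI': "card I' > card B" using insert i0 by (simp add: I'_def)
    have wK: "\<forall>i\<in>I'. \<forall>b\<in>B. w' i b \<in> K"
      using insert.prems i0 by (auto simp: w'_def I'_def intro!: sf_diff[OF K] sf_mult[OF K] sf_divide[OF K])
    obtain \<mu>' where mu': "\<forall>i\<in>I'. \<mu>' i \<in> K" "\<exists>i\<in>I'. \<mu>' i \<noteq> 0" "\<forall>b\<in>B. (\<Sum>i\<in>I'. \<mu>' i * w' i b) = 0"
      using insert.IH[OF _ cI' wK] insert.prems by (auto simp: I'_def)
    define S where "S = (\<Sum>i\<in>I'. \<mu>' i * w i b0)"
    define \<mu> where "\<mu> = \<mu>'(i0 := - (S / w i0 b0))"
    have fI: "finite I'" using insert.prems by (simp add: I'_def)
    have Ieq: "I = insert i0 I'" "i0 \<notin> I'" using i0 by (auto simp: I'_def)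
    have sumI: "(\<Sum>i\<in>I. \<mu> i * w i b) = \<mu> i0 * w i0 b + (\<Sum>i\<in>I'. \<mu>' i * w i b)" for b
    proof -
      have "(\<Sum>i\<in>I'. \<mu> i * w i b) = (\<Sum>i\<in>I'. \<mu>' i * w i b)"
        using Ieq by (intro sum.cong) (auto simp: \<mu>_def)
      then show ?thesis using Ieq fI by (simp add: sum.insert)
    qed
    have key: "(\<Sum>i\<in>I'. \<mu>' i * w' i b) = (\<Sum>i\<in>I'. \<mu>' i * w i b) + \<mu> i0 * w i0 b" for b
    proof -
      have "(\<Sum>i\<in>I'. \<mu>' i * w' i b) = (\<Sum>i\<in>I'. \<mu>' i * w i b - (\<mu>' i * w i b0) * (w i0 b / w i0 b0))"
        by (intro sum.cong) (auto simp: w'_def algebra_simps)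
      also have "\<dots> = (\<Sum>i\<in>I'. \<mu>' i * w i b) - (\<Sum>i\<in>I'. (\<mu>' i * w i b0) * (w i0 b / w i0 b0))"
        by (rule sum_subtractf)
      also have "\<dots> = (\<Sum>i\<in>I'. \<mu>' i * w i b) - S * (w i0 b / w i0 b0)"
        by (simp only: S_def sum_distrib_right)
      also have "\<dots> = (\<Sum>i\<in>I'. \<mu>' i * w i b) + \<mu> i0 * w i0 b"
        by (simp add: \<mu>_def)
      finally show ?thesis .
    qed
    show ?thesis
    proof (intro exI[of _ \<mu>] conjI)
      show "\<forall>i\<in>I. \<mu> i \<in> K"
      proof
        fix i assume "i \<in> I"
        show "\<mu> i \<in> K"
        proof (cases "i = i0")
          case True
          have "S \<in> K" unfolding S_def using mu'(1) insert.prems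
            by (intro sf_sum[OF K] sf_mult[OF K]) (auto simp: I'_def)
          then show ?thesis using True insert.prems i0
            by (auto simp: \<mu>_def intro!: sf_uminus[OF K] sf_divide[OF K])
        next
          case False then show ?thesis using mu'(1) \<open>i \<in> I\<close> by (auto simp: \<mu>_def I'_def)
        qed
      qed
      show "\<exists>i\<in>I. \<mu> i \<noteq> 0" using mu'(2) by (auto simp: \<mu>_def I'_def)
      show "\<forall>b\<in>insert b0 B. (\<Sum>i\<in>I. \<mu> i * w i b) = 0"
      proof
        fix b assume b: "b \<in> insert b0 B"
        show "(\<Sum>i\<in>I. \<mu> i * w i b) = 0"
        proof (cases "b = b0")
          case True
          then show ?thesis using sumI[of b0] i0 by (simp add: \<mu>_def S_def)
        next
          case False
          then have "b \<in> B" using b by simp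
          then show ?thesis using sumI[of b] key[of b] mu'(3) by (simp add: add.commute)
        qed
      qed
    qed
  qed
qed

lemma dep_span:
  assumes K: "subfield K" and B: "finite B"
    and span: "\<forall>y. \<exists>c. (\<forall>b\<in>B. c b \<in> K) \<and> y = (\<Sum>b\<in>B. c b * b)"
    and m: "m > card B"
  shows "\<exists>\<mu>. (\<forall>i<m. \<mu> i \<in> K) \<and> (\<exists>i<m. \<mu> i \<noteq> 0) \<and> (\<Sum>i<m. \<mu> i * y i) = 0"
proof -
  define cf where "cf z = (SOME c. (\<forall>b\<in>B. c b \<in> K) \<and> z = (\<Sum>b\<in>B. c b * b))" for z
  have cf: "(\<forall>b\<in>B. cf z b \<in> K) \<and> z = (\<Sum>b\<in>B. cf z b * b)" for z
    unfolding cf_def using someI_ex[OF span[rule_format, of z]] .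
  obtain \<mu> where mu: "\<forall>i\<in>{..<m}. \<mu> i \<in> K" "\<exists>i\<in>{..<m}. \<mu> i \<noteq> 0"
      "\<forall>b\<in>B. (\<Sum>i\<in>{..<m}. \<mu> i * cf (y i) b) = 0"
    using dep_core[OF K B, of "{..<m}" "\<lambda>i b. cf (y i) b"] m cf by auto
  have "(\<Sum>i<m. \<mu> i * y i) = (\<Sum>i<m. \<mu> i * (\<Sum>b\<in>B. cf (y i) b * b))"
    using cf by (metis)
  also have "\<dots> = (\<Sum>b\<in>B. (\<Sum>i<m. \<mu> i * cf (y i) b) * b)"
    by (simp add: sum_distrib_left sum_distrib_right sum.swap[of _ B] mult.assoc)
  also have "\<dots> = 0" using mu(3) by simp
  finally show ?thesis using mu by auto
qed

lemma transc_nz: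
  assumes "\<not> algebraic_over F x" "poly_over F p" "p \<noteq> 0"
  shows "poly p x \<noteq> 0"
  using assms by (auto simp: algebraic_over_def)

lemma RF_poly: "subfield F \<Longrightarrow> poly_over F p \<Longrightarrow> poly p x \<in> rat_fun_field F x"
  unfolding rat_fun_field_def
  by (rule CollectI, rule exI[of _ p], rule exI[of _ 1]) (auto simp: sf_1 one_pCons po_const[of F 1])

lemma RF_const: "subfield F \<Longrightarrow> c \<in> F \<Longrightarrow> c \<in> rat_fun_field F x"
  using RF_poly[of F "[:c:]" x] po_const[of F c] by simp

lemma RF_elim:
  assumes "a \<in> rat_fun_field F x"
  obtains p r where "poly_over F p" "poly_over F r" "poly r x \<noteq> 0" "a = poly p x / poly r x"
proof -
  from assms have "\<exists>p r. poly_over F p \<and> poly_over F r \<and> poly r x \<noteq> 0 \<and> a = poly p x / poly r x"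
    unfolding rat_fun_field_def by blast
  then show ?thesis using that by blast
qed

lemma RF_intro:
  "poly_over F p \<Longrightarrow> poly_over F r \<Longrightarrow> poly r x \<noteq> 0 \<Longrightarrow> poly p x / poly r x \<in> rat_fun_field F x"
  unfolding rat_fun_field_def by blast

lemma RF_subfield:
  assumes F: "subfield F"
  shows "subfield (rat_fun_field F x)"
proof -
  let ?R = "rat_fun_field F x"
  have add: "a + b \<in> ?R" if ha: "a \<in> ?R" and hb: "b \<in> ?R" for a b
  proof -
    obtain p r where pr: "poly_over F p" "poly_over F r" "poly r x \<noteq> 0" "a = poly p x / poly r x"
      using ha by (rule RF_elim)
    obtain p' r' where pr': "poly_over F p'" "poly_over F r'" "poly r' x \<noteq> 0" "b = poly p' x / poly r' x"
      using hb by (rule RF_elim)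
    have "a + b = poly (p * r' + p' * r) x / poly (r * r') x"
      unfolding pr(4) pr'(4) using pr(3) pr'(3) by (simp add: add_frac_eq)
    moreover have "poly (p * r' + p' * r) x / poly (r * r') x \<in> ?R"
      by (rule RF_intro) (use pr pr' F in \<open>auto intro!: po_add po_mult\<close>)
    ultimately show ?thesis by simp
  qed
  have mult: "a * b \<in> ?R" if ha: "a \<in> ?R" and hb: "b \<in> ?R" for a b
  proof -
    obtain p r where pr: "poly_over F p" "poly_over F r" "poly r x \<noteq> 0" "a = poly p x / poly r x"
      using ha by (rule RF_elim)
    obtain p' r' where pr': "poly_over F p'" "poly_over F r'" "poly r' x \<noteq> 0" "b = poly p' x / poly r' x"
      using hb by (rule RF_elim)
    have "a * b = poly (p * p') x / poly (r * r') x"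
      unfolding pr(4) pr'(4) poly_mult by (rule times_divide_times_eq)
    moreover have "poly (p * p') x / poly (r * r') x \<in> ?R"
      by (rule RF_intro) (use pr pr' F in \<open>auto intro!: po_mult\<close>)
    ultimately show ?thesis by simp
  qed
  have neg: "- a \<in> ?R" if ha: "a \<in> ?R" for a
  proof -
    obtain p r where pr: "poly_over F p" "poly_over F r" "poly r x \<noteq> 0" "a = poly p x / poly r x"
      using ha by (rule RF_elim)
    have "- a = poly (- p) x / poly r x" using pr by simp
    moreover have "poly (- p) x / poly r x \<in> ?R"
      by (rule RF_intro) (use pr F in \<open>auto intro!: po_uminus\<close>)
    ultimately show ?thesis by simp
  qed
  have inv: "inverse a \<in> ?R" if ha: "a \<in> ?R" for a
  proof -
    obtain p r where pr: "poly_over F p" "poly_over F r" "poly r x \<noteq> 0" "a = poly p x / poly r x"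
      using ha by (rule RF_elim)
    show ?thesis
    proof (cases "poly p x = 0")
      case True then show ?thesis using pr RF_const[OF F sf_0[OF F], of x] by simp
    next
      case False
      then have "inverse a = poly r x / poly p x" using pr by simp
      then show ?thesis using pr False by (auto intro!: RF_intro)
    qed
  qed
  have z: "0 \<in> ?R" and o: "1 \<in> ?R" using RF_const[OF F sf_0[OF F], of x] RF_const[OF F sf_1[OF F], of x] by auto
  show ?thesis unfolding subfield_def
    by (intro conjI ballI z o add mult neg inv)
qed

lemma RF_swap:
  assumes F: "subfield F" and x: "x \<noteq> 0"
  shows "rat_fun_field F x \<subseteq> rat_fun_field F (inverse x)"
proof
  fix a assume "a \<in> rat_fun_field F x"
  then obtain p r where pr: "poly_over F p" "poly_over F r" "poly r x \<noteq> 0" "a = poly p x / poly r x"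
    by (rule RF_elim)
  let ?y = "inverse x"
  have y: "?y \<noteq> 0" using x by simp
  define P where "P = reflect_poly p * monom 1 (degree r)"
  define R where "R = reflect_poly r * monom 1 (degree p)"
  have P: "poly P ?y = ?y ^ degree p * poly p x * ?y ^ degree r"
    unfolding P_def using poly_reflect_poly_nz[OF y, of p] by (simp add: poly_monom)
  have R: "poly R ?y = ?y ^ degree r * poly r x * ?y ^ degree p"
    unfolding R_def using poly_reflect_poly_nz[OF y, of r] by (simp add: poly_monom)
  have Rnz: "poly R ?y \<noteq> 0" using R pr y by simp
  have P2: "poly P ?y = (?y ^ degree p * ?y ^ degree r) * poly p x" using P by (simp only: ac_simps)
  have R2: "poly R ?y = (?y ^ degree p * ?y ^ degree r) * poly r x" using R by (simp only: ac_simps)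
  have "a = poly P ?y / poly R ?y" unfolding P2 R2 pr(4)
    by (rule nonzero_mult_divide_mult_cancel_left[symmetric]) (use y in simp)
  moreover have "poly_over F P" "poly_over F R" unfolding P_def R_def
    using pr F by (auto intro!: po_mult po_reflect po_monom sf_1)
  ultimately show "a \<in> rat_fun_field F ?y" using Rnz by (auto intro!: RF_intro)
qed

lemma po_coeff: "poly_over F p \<Longrightarrow> coeff p n \<in> F" by (simp add: poly_over_def)

lemma div_exists:
  assumes F: "subfield F" and pi: "poly_over F \<pi>" "\<pi> \<noteq> 0"
  shows "poly_over F p \<Longrightarrow> \<exists>q s. poly_over F q \<and> poly_over F s \<and> p = \<pi> * q + s \<and> (s = 0 \<or> degree s < degree \<pi>)"
proof (induction "degree p" arbitrary: p rule: less_induct)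
  case less
  show ?case
  proof (cases "p = 0 \<or> degree p < degree \<pi>")
    case True
    then show ?thesis using less.prems F by (intro exI[of _ 0] exI[of _ p]) auto
  next
    case False
    then have p0: "p \<noteq> 0" and dg: "degree \<pi> \<le> degree p" by auto
    define k where "k = degree p - degree \<pi>"
    define c where "c = lead_coeff p / lead_coeff \<pi>"
    define p' where "p' = p - monom c k * \<pi>"
    have cF: "c \<in> F" unfolding c_def using less.prems pi F by (intro sf_divide po_lead) auto
    have po': "poly_over F p'" unfolding p'_def using less.prems pi F cF
      by (intro po_diff po_mult po_monom) auto
    have lc: "lead_coeff \<pi> \<noteq> 0" using pi by simp
    have cz: "coeff p' n = 0" if "n \<ge> degree p" for n
    proof (cases "n = degree p")
      case True
      then show ?thesis using dg lc by (simp add: p'_def coeff_monom_mult k_def c_def)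
    next
      case False
      then have "n > degree p" using that by simp
      then have "coeff p n = 0" "coeff \<pi> (n - k) = 0" using dg by (auto simp: k_def coeff_eq_0)
      then show ?thesis by (simp add: p'_def coeff_monom_mult)
    qed
    show ?thesis
    proof (cases "p' = 0")
      case True
      then have "p = \<pi> * monom c k + 0" by (simp add: p'_def mult.commute)
      then show ?thesis using F cF by (intro exI[of _ "monom c k"] exI[of _ 0]) (auto intro: po_monom)
    next
      case False
      then have "degree p' < degree p"
        using cz[of "degree p'"] by (metis leading_coeff_0_iff not_le)
      then obtain q s where qs: "poly_over F q" "poly_over F s" "p' = \<pi> * q + s" "s = 0 \<or> degree s < degree \<pi>"
        using less.hyps po' by blast
      have "p = \<pi> * (q + monom c k) + s" using qs(3) by (simp add: p'_def algebra_simps)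
      then show ?thesis using qs F cF by (intro exI[of _ "q + monom c k"] exI[of _ s]) (auto intro: po_add po_monom)
    qed
  qed
qed

locale vpx = vp +
  fixes x :: "'k::field" and B :: "'k set"
  assumes tr: "\<not> algebraic_over Fq x" and vx: "v x \<ge> 0" and finFq: "finite Fq"
    and finB: "finite B"
    and span: "\<forall>y. \<exists>c. (\<forall>b\<in>B. c b \<in> rat_fun_field Fq x) \<and> y = (\<Sum>b\<in>B. c b * b)"
begin

lemma x_nz: "x \<noteq> 0"
proof
  assume "x = 0"
  then have "algebraic_over Fq x" unfolding algebraic_over_def
    using sf by (intro exI[of _ "[:0, 1:]"]) (auto simp: poly_over_def coeff_pCons sf_0 sf_1 split: nat.splits)
  then show False using tr by simp
qed

lemma reg_x: "regular_at v x" using vx by (simp add: regular_at_def)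

lemma polyreg: "poly_over Fq p \<Longrightarrow> regular_at v (poly p x)"
proof (induction p)
  case (pCons a p)
  then show ?case using reg_const[of a] reg_x by (auto simp: po_pCons intro!: reg_add reg_mult)
qed simp

lemma pnz: "poly_over Fq p \<Longrightarrow> p \<noteq> 0 \<Longrightarrow> poly p x \<noteq> 0"
  using tr by (auto simp: algebraic_over_def)

end

context vpx
begin

abbreviation "RF \<equiv> rat_fun_field Fq x"

lemma RF_val0:
  assumes noI: "\<forall>p. poly_over Fq p \<and> p \<noteq> 0 \<longrightarrow> \<not> vanishes_at v (poly p x)"
  shows "a \<in> RF \<Longrightarrow> a \<noteq> 0 \<Longrightarrow> v a = 0"
proof -
  assume a: "a \<in> RF" "a \<noteq> 0"
  obtain p r where pr: "poly_over Fq p" "poly_over Fq r" "poly r x \<noteq> 0" "a = poly p x / poly r x"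
    using a(1) by (rule RF_elim)
  have "p \<noteq> 0" using a pr by auto
  have v0: "v (poly q x) = 0" if "poly_over Fq q" "q \<noteq> 0" for q
    using noI that polyreg[OF that(1)] pnz[OF that] by (auto simp: regular_at_def vanishes_at_def)
  have "r \<noteq> 0" using pr by auto
  then show "v a = 0" using pr \<open>p \<noteq> 0\<close> v0 pnz by (simp add: v_divide)
qed

lemma I_nonempty: "\<exists>p. poly_over Fq p \<and> p \<noteq> 0 \<and> vanishes_at v (poly p x)"
proof (rule ccontr)
  assume "\<not> ?thesis"
  then have noI: "\<forall>p. poly_over Fq p \<and> p \<noteq> 0 \<longrightarrow> \<not> vanishes_at v (poly p x)" by blast
  obtain y where y: "v y = -1" using v_surj by (metis surjD)
  have y0: "y \<noteq> 0" using y by auto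
  define m where "m = Suc (card B)"
  obtain \<mu> where mu: "\<forall>i<m. \<mu> i \<in> RF" "\<exists>i<m. \<mu> i \<noteq> 0" "(\<Sum>i<m. \<mu> i * y ^ i) = 0"
    using dep_span[OF RF_subfield[OF sf] finB span, of m "\<lambda>i. y ^ i"] by (auto simp: m_def)
  define S where "S = {i. i < m \<and> \<mu> i \<noteq> 0}"
  have fS: "finite S" "S \<noteq> {}" using mu(2) by (auto simp: S_def)
  have vals: "v (\<mu> i * y ^ i) = - int i" if "i \<in> S" for i
    using that RF_val0[OF noI, of "\<mu> i"] mu(1) y y0 by (simp add: S_def v_mult v_power)
  have "inj_on (\<lambda>i. v (\<mu> i * y ^ i)) S"
    by (rule inj_onI) (simp add: vals)
  then have "(\<Sum>i\<in>S. \<mu> i * y ^ i) \<noteq> 0"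
    using distinct_val_sum[OF fS, of "\<lambda>i. \<mu> i * y ^ i"] y0 by (auto simp: S_def)
  moreover have "(\<Sum>i\<in>S. \<mu> i * y ^ i) = (\<Sum>i<m. \<mu> i * y ^ i)"
    by (rule sum.mono_neutral_left) (auto simp: S_def)
  ultimately show False using mu(3) by simp
qed

lemma A_reps: "\<exists>K. finite K \<and> K \<subseteq> {z. regular_at v z} \<and> (\<forall>a\<in>RF. regular_at v a \<longrightarrow> (\<exists>\<kappa>\<in>K. vanishes_at v (a - \<kappa>)))"
proof -
  let ?P = "\<lambda>p. poly_over Fq p \<and> p \<noteq> 0 \<and> vanishes_at v (poly p x)"
  obtain \<pi> where pi: "?P \<pi>" and pimin: "\<And>q. ?P q \<Longrightarrow> degree \<pi> \<le> degree q"
    using ex_has_least_nat[of ?P _ degree] I_nonempty by blast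
  define d where "d = degree \<pi>"
  have d0: "d > 0"
  proof (rule ccontr)
    assume "\<not> d > 0"
    then have "degree \<pi> = 0" by (simp add: d_def)
    then have eq: "\<pi> = [:coeff \<pi> 0:]" by (metis degree_0_id)
    have "poly \<pi> x = coeff \<pi> 0" by (subst eq) simp
    moreover have "coeff \<pi> 0 \<in> Fq" using pi by (simp add: po_coeff)
    ultimately have "coeff \<pi> 0 = 0" using pi van_const[of "coeff \<pi> 0"] by simp
    then show False using pi eq by (metis pCons_0_0)
  qed
  have minimal: "\<not> vanishes_at v (poly s x)" if "poly_over Fq s" "s \<noteq> 0" "degree s < d" for s
    using pimin[of s] that by (auto simp: d_def)
  have e: "v (poly \<pi> x) > 0" "poly \<pi> x \<noteq> 0" using pi pnz[of \<pi>] by (auto simp: vanishes_at_def)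
  define Q where "Q = {q. poly_over Fq q \<and> degree q < d}"
  have finQ: "finite Q" unfolding Q_def by (rule po_finite[OF finFq])
  have reduce: "\<exists>u\<in>Q. vanishes_at v (poly p x - poly u x)" if hp: "poly_over Fq p" for p
  proof -
    obtain q s where qs: "poly_over Fq q" "poly_over Fq s" "p = \<pi> * q + s" "s = 0 \<or> degree s < degree \<pi>"
      using div_exists[OF sf _ _ hp, of \<pi>] pi by blast
    have "s \<in> Q" using qs d0 by (auto simp: Q_def d_def)
    moreover have "poly p x - poly s x = poly \<pi> x * poly q x" using qs(3) by simp
    moreover have "vanishes_at v (poly \<pi> x * poly q x)" using pi polyreg[OF qs(1)] by (intro van_mult2) auto
    ultimately show ?thesis by metis
  qed
  have factor: "poly_over Fq r \<Longrightarrow> r \<noteq> 0 \<Longrightarrow> \<exists>k r'. poly_over Fq r' \<and> r' \<noteq> 0 \<and> r = \<pi> ^ k * r' \<and> \<not> vanishes_at v (poly r' x)" for r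
  proof (induction "degree r" arbitrary: r rule: less_induct)
    case less
    show ?case
    proof (cases "vanishes_at v (poly r x)")
      case False then show ?thesis using less.prems by (intro exI[of _ 0] exI[of _ r]) auto
    next
      case True
      obtain q s where qs: "poly_over Fq q" "poly_over Fq s" "r = \<pi> * q + s" "s = 0 \<or> degree s < degree \<pi>"
        using div_exists[OF sf _ _ less.prems(1), of \<pi>] pi by blast
      have "poly s x = poly r x - poly \<pi> x * poly q x" using qs(3) by simp
      then have "vanishes_at v (poly s x)" using True pi polyreg[OF qs(1)] by (auto intro!: van_diff van_mult2)
      then have s0: "s = 0" using minimal[of s] qs by (auto simp: d_def)
      then have rq: "r = \<pi> * q" using qs by simp
      have q0: "q \<noteq> 0" using rq less.prems by auto
      have "degree r = d + degree q" using rq q0 pi by (simp add: degree_mult_eq d_def)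
      then have "degree q < degree r" using d0 by simp
      then obtain k r' where kr: "poly_over Fq r'" "r' \<noteq> 0" "q = \<pi> ^ k * r'" "\<not> vanishes_at v (poly r' x)"
        using less.hyps[of q] qs(1) q0 by blast
      then show ?thesis using rq by (intro exI[of _ "Suc k"] exI[of _ r']) (auto simp: mult.assoc)
    qed
  qed
  have invrep: "\<exists>s. poly_over Fq s \<and> vanishes_at v (poly r x * poly s x - 1)"
    if r: "poly_over Fq r" "\<not> vanishes_at v (poly r x)" for r
  proof -
    have ur: "v (poly r x) = 0" "poly r x \<noteq> 0" using unit_inv[OF polyreg[OF r(1)] r(2)] by auto
    define \<phi> where "\<phi> s = (SOME u. u \<in> Q \<and> vanishes_at v (poly (r * s) x - poly u x))" for s
    have phi: "\<phi> s \<in> Q \<and> vanishes_at v (poly (r * s) x - poly (\<phi> s) x)" if "s \<in> Q" for s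
    proof -
      have "poly_over Fq (r * s)" using that r sf by (auto simp: Q_def intro: po_mult)
      then show ?thesis unfolding \<phi>_def using reduce by (metis (no_types, lifting) someI_ex)
    qed
    have "inj_on \<phi> Q"
    proof (rule inj_onI)
      fix s1 s2 assume s: "s1 \<in> Q" "s2 \<in> Q" "\<phi> s1 = \<phi> s2"
      have "vanishes_at v (poly (r * s1) x - poly (r * s2) x)"
        using phi[OF s(1)] phi[OF s(2)] s(3)
        by (metis (no_types, lifting) cong_trans minus_diff_eq van_uminus)
      then have van: "vanishes_at v (poly r x * poly (s1 - s2) x)" by (simp add: algebra_simps)
      have "vanishes_at v (poly (s1 - s2) x)"
      proof (cases "poly (s1 - s2) x = 0")
        case False
        then show ?thesis using van ur by (auto simp: vanishes_at_def v_mult)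
      qed simp
      moreover have "poly_over Fq (s1 - s2)" "degree (s1 - s2) < d"
        using s sf by (auto simp: Q_def intro: po_diff degree_diff_le_max[THEN le_less_trans])
      ultimately show "s1 = s2" using minimal[of "s1 - s2"] by auto
    qed
    moreover have "\<phi> ` Q \<subseteq> Q" using phi by auto
    ultimately have "\<phi> ` Q = Q" using endo_inj_surj finQ by blast
    moreover have "1 \<in> Q" using sf d0 po_const[of Fq 1] by (simp add: Q_def sf_1 one_pCons)
    ultimately obtain s where s: "s \<in> Q" "\<phi> s = 1" by (metis imageE)
    show ?thesis using phi[OF s(1)] s by (intro exI[of _ s]) (auto simp: Q_def)
  qed
  define K where "K = (\<lambda>q. poly q x) ` Q"
  have "finite K" using finQ by (simp add: K_def)
  moreover have "K \<subseteq> {z. regular_at v z}" using polyreg by (auto simp: K_def Q_def)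
  moreover have "\<exists>\<kappa>\<in>K. vanishes_at v (a - \<kappa>)" if a: "a \<in> RF" "regular_at v a" for a
  proof -
    have zK: "0 \<in> K" using d0 sf by (auto simp: K_def Q_def intro!: image_eqI[of 0 _ 0])
    obtain p r where pr: "poly_over Fq p" "poly_over Fq r" "poly r x \<noteq> 0" "a = poly p x / poly r x"
      using a(1) by (rule RF_elim)
    show ?thesis
    proof (cases "p = 0")
      case True then show ?thesis using zK pr by (intro bexI[of _ 0]) auto
    next
      case False
      have r0: "r \<noteq> 0" using pr by auto
      obtain j p' where jp: "poly_over Fq p'" "p' \<noteq> 0" "p = \<pi> ^ j * p'" "\<not> vanishes_at v (poly p' x)"
        using factor[OF pr(1) False] by blast
      obtain k r' where kr: "poly_over Fq r'" "r' \<noteq> 0" "r = \<pi> ^ k * r'" "\<not> vanishes_at v (poly r' x)"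
        using factor[OF pr(2) r0] by blast
      have up: "v (poly p' x) = 0" "poly p' x \<noteq> 0" using unit_inv[OF polyreg[OF jp(1)] jp(4)] by auto
      have ur: "v (poly r' x) = 0" "poly r' x \<noteq> 0" using unit_inv[OF polyreg[OF kr(1)] kr(4)] by auto
      have a0: "a \<noteq> 0" using pr pnz[OF pr(1) False] by simp
      have va: "v a = (int j - int k) * v (poly \<pi> x)"
        using pr(4) jp(3) kr(3) up ur e by (simp add: v_divide v_mult v_power algebra_simps)
      consider "j > k" | "j < k" | "j = k" by linarith
      then show ?thesis
      proof cases
        case 1
        then have "v a > 0" using va e by simp
        then show ?thesis using zK by (intro bexI[of _ 0]) (auto simp: vanishes_at_def)
      next
        case 2
        then have "v a < 0" using va e by (simp add: mult_neg_pos)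
        then show ?thesis using a(2) a0 by (simp add: regular_at_def)
      next
        case 3
        then have aeq: "a = poly p' x / poly r' x" using pr(4) jp(3) kr(3) e by simp
        obtain s where s: "poly_over Fq s" "vanishes_at v (poly r' x * poly s x - 1)"
          using invrep[OF kr(1) kr(4)] by blast
        obtain u where u: "u \<in> Q" "vanishes_at v (poly (p' * s) x - poly u x)"
          using reduce[of "p' * s"] jp(1) s(1) sf by (auto intro: po_mult)
        have "a - poly (p' * s) x = - (poly p' x * inverse (poly r' x) * (poly r' x * poly s x - 1))"
          using aeq ur by (simp add: field_simps)
        moreover have "vanishes_at v (poly p' x * inverse (poly r' x) * (poly r' x * poly s x - 1))"
          using s(2) polyreg[OF jp(1)] unit_inv(3)[OF polyreg[OF kr(1)] kr(4)]
          by (intro van_mult reg_mult)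
        ultimately have "vanishes_at v (a - poly (p' * s) x)" by (simp add: van_uminus)
        then have "vanishes_at v (a - poly u x)" using u(2) by (rule cong_trans)
        then show ?thesis using u(1) by (auto simp: K_def)
      qed
    qed
  qed
  ultimately show ?thesis by blast
qed

end

context vp
begin

definition indepC :: "'k set \<Rightarrow> nat \<Rightarrow> (nat \<Rightarrow> 'k) \<Rightarrow> bool" where
  "indepC C m z \<longleftrightarrow> (\<forall>a. (\<forall>i<m. a i \<in> C) \<longrightarrow> vanishes_at v (\<Sum>i<m. a i * z i) \<longrightarrow> (\<forall>i<m. vanishes_at v (a i)))"

lemma extend:
  assumes CO: "C \<subseteq> {z. regular_at v z}"
    and closed: "\<And>a b. a \<in> C \<Longrightarrow> b \<in> C \<Longrightarrow> \<not> vanishes_at v a \<Longrightarrow> - (b / a) \<in> C"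
    and reps: "\<And>c. c \<in> C \<Longrightarrow> \<exists>\<kappa>\<in>K. vanishes_at v (c - \<kappa>)"
    and zO: "\<And>i. i < m \<Longrightarrow> regular_at v (z i)"
    and ind: "indepC C m z" and wO: "regular_at v w"
    and wn: "\<And>\<kappa>. (\<forall>i<m. \<kappa> i \<in> K) \<Longrightarrow> \<not> vanishes_at v (w - (\<Sum>i<m. \<kappa> i * z i))"
  shows "indepC C (Suc m) (z(m := w))"
  unfolding indepC_def
proof (rule allI, rule impI, rule impI)
  fix a assume aC: "\<forall>i<Suc m. a i \<in> C" and van0: "vanishes_at v (\<Sum>i<Suc m. a i * (z(m := w)) i)"
  have seq: "(\<Sum>i<Suc m. a i * (z(m := w)) i) = (\<Sum>i<m. a i * z i) + a m * w"
    by (simp add: lessThan_Suc sum.insert)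
  have van: "vanishes_at v ((\<Sum>i<m. a i * z i) + a m * w)" using van0 seq by simp
  have am: "vanishes_at v (a m)"
  proof (rule ccontr)
    assume nv: "\<not> vanishes_at v (a m)"
    have amC: "a m \<in> C" using aC by simp
    have amO: "regular_at v (a m)" using amC CO by auto
    have am0: "a m \<noteq> 0" using unit_inv[OF amO nv] by simp
    define b where "b i = - (a i / a m)" for i
    have bC: "b i \<in> C" if "i < m" for i using closed[OF amC, of "a i"] aC that nv by (simp add: b_def)
    define \<kappa> where "\<kappa> i = (SOME k. k \<in> K \<and> vanishes_at v (b i - k))" for i
    have kap: "\<kappa> i \<in> K \<and> vanishes_at v (b i - \<kappa> i)" if "i < m" for i
      unfolding \<kappa>_def using reps[OF bC[OF that]] by (metis (no_types, lifting) someI_ex)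
    define Sa where "Sa = (\<Sum>i<m. a i * z i)"
    define Sb where "Sb = (\<Sum>i<m. b i * z i)"
    define Sk where "Sk = (\<Sum>i<m. \<kappa> i * z i)"
    define Sd where "Sd = (\<Sum>i<m. (b i - \<kappa> i) * z i)"
    have e1: "Sd = Sb - Sk" unfolding Sd_def Sb_def Sk_def by (simp add: algebra_simps sum_subtractf)
    have e2: "Sb = - inverse (a m) * Sa"
      unfolding Sb_def Sa_def by (simp add: b_def sum_distrib_left sum_negf divide_inverse algebra_simps)
    have e3: "inverse (a m) * (a m * w) = w" using am0 by simp
    have eq: "w - Sk = inverse (a m) * (Sa + a m * w) + Sd"
      unfolding e1 e2 distrib_left e3 by simp
    have "vanishes_at v (inverse (a m) * ((\<Sum>i<m. a i * z i) + a m * w))"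
      using van unit_inv(3)[OF amO nv] by (intro van_mult)
    moreover have "vanishes_at v (\<Sum>i<m. (b i - \<kappa> i) * z i)"
      using kap zO by (intro van_sum van_mult2) auto
    ultimately have "vanishes_at v (w - Sk)" unfolding eq Sa_def Sd_def by (rule van_add)
    then show False using wn[of \<kappa>] kap unfolding Sk_def by auto
  qed
  have "vanishes_at v (a m * w)" using am wO by (rule van_mult2)
  then have "vanishes_at v ((\<Sum>i<m. a i * z i) + a m * w - a m * w)" by (rule van_diff[OF van])
  then have "vanishes_at v (\<Sum>i<m. a i * z i)" by simp
  then have "\<forall>i<m. vanishes_at v (a i)" using ind aC unfolding indepC_def by auto
  then show "\<forall>i<Suc m. vanishes_at v (a i)" using am less_Suc_eq by auto
qed

lemma finrep:
  assumes K0: "subfield K0" and finB: "finite B"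
    and span: "\<forall>y. \<exists>c. (\<forall>b\<in>B. c b \<in> K0) \<and> y = (\<Sum>b\<in>B. c b * b)"
    and Kfin: "finite K" and KO: "K \<subseteq> {z. regular_at v z}"
    and reps: "\<forall>a\<in>K0. regular_at v a \<longrightarrow> (\<exists>\<kappa>\<in>K. vanishes_at v (a - \<kappa>))"
  shows "\<exists>S. finite S \<and> S \<subseteq> {z. regular_at v z} \<and> (\<forall>z. regular_at v z \<longrightarrow> (\<exists>s\<in>S. vanishes_at v (z - s)))"
proof (rule ccontr)
  assume nf: "\<not> ?thesis"
  let ?A = "{a \<in> K0. regular_at v a}"
  have closed: "- (b / a) \<in> ?A" if "a \<in> ?A" "b \<in> ?A" "\<not> vanishes_at v a" for a b
  proof -
    have "- (b / a) \<in> K0" using that K0 by (auto intro: sf_uminus sf_divide)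
    moreover have "regular_at v (- (b / a))"
    proof -
      have "regular_at v (inverse a)" using unit_inv(3)[of a] that by simp
      moreover have "regular_at v b" using that by simp
      ultimately show ?thesis unfolding divide_inverse by (intro reg_uminus reg_mult)
    qed
    ultimately show ?thesis by simp
  qed
  have nf': "\<exists>w. regular_at v w \<and> (\<forall>s\<in>S. \<not> vanishes_at v (w - s))"
    if fS: "finite S" and SO: "S \<subseteq> {z. regular_at v z}" for S
  proof (rule ccontr)
    assume "\<not> (\<exists>w. regular_at v w \<and> (\<forall>s\<in>S. \<not> vanishes_at v (w - s)))"
    then have "\<forall>z. regular_at v z \<longrightarrow> (\<exists>s\<in>S. vanishes_at v (z - s))" by blast
    then show False using nf fS SO by blast
  qed
  have ex: "\<exists>z. (\<forall>i<m. regular_at v (z i)) \<and> indepC ?A m z" for m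
  proof (induction m)
    case 0 then show ?case by (auto simp: indepC_def)
  next
    case (Suc m)
    then obtain z where z: "\<forall>i<m. regular_at v (z i)" "indepC ?A m z" by blast
    define S' where "S' = (\<lambda>\<kappa>. \<Sum>i<m. \<kappa> i * z i) ` (\<Pi>\<^sub>E i\<in>{..<m}. K)"
    have "finite S'" unfolding S'_def using Kfin by (auto intro: finite_PiE)
    moreover have "S' \<subseteq> {z. regular_at v z}" unfolding S'_def using KO z(1)
      by (auto intro!: reg_sum reg_mult simp: PiE_iff)
    ultimately obtain w where w: "regular_at v w" "\<forall>s\<in>S'. \<not> vanishes_at v (w - s)" using nf' by blast
    have wn: "\<not> vanishes_at v (w - (\<Sum>i<m. \<kappa> i * z i))" if "\<forall>i<m. \<kappa> i \<in> K" for \<kappa>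
    proof -
      have "(\<Sum>i<m. \<kappa> i * z i) = (\<Sum>i<m. restrict \<kappa> {..<m} i * z i)" by simp
      moreover have "restrict \<kappa> {..<m} \<in> (\<Pi>\<^sub>E i\<in>{..<m}. K)" using that by auto
      ultimately have "(\<Sum>i<m. \<kappa> i * z i) \<in> S'" unfolding S'_def by (rule image_eqI)
      then show ?thesis using w by blast
    qed
    have "indepC ?A (Suc m) (z(m := w))"
      by (rule extend[OF _ closed _ _ z(2) w(1) wn]) (use reps z(1) in auto)
    moreover have "\<forall>i<Suc m. regular_at v ((z(m := w)) i)" using z(1) w(1) by (auto simp: less_Suc_eq)
    ultimately show ?case by blast
  qed
  define m where "m = Suc (card B)"
  obtain z where z: "\<forall>i<m. regular_at v (z i)" "indepC ?A m z" using ex by blast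
  obtain \<mu> where mu: "\<forall>i<m. \<mu> i \<in> K0" "\<exists>i<m. \<mu> i \<noteq> 0" "(\<Sum>i<m. \<mu> i * z i) = 0"
    using dep_span[OF K0 finB span, of m z] by (auto simp: m_def)
  define S where "S = {i. i < m \<and> \<mu> i \<noteq> 0}"
  have fS: "finite S" "S \<noteq> {}" using mu(2) by (auto simp: S_def)
  obtain j where j: "j \<in> S" "v (\<mu> j) = Min ((\<lambda>i. v (\<mu> i)) ` S)"
    using Min_in[of "(\<lambda>i. v (\<mu> i)) ` S"] fS by (metis (no_types, lifting) finite_imageI image_iff image_is_empty)
  have jmin: "v (\<mu> j) \<le> v (\<mu> i)" if "i \<in> S" for i using j that fS by simp
  define a where "a i = \<mu> i / \<mu> j" for i
  have aA: "\<forall>i<m. a i \<in> ?A"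
  proof (intro allI impI)
    fix i assume i: "i < m"
    have "a i \<in> K0" using mu(1) i j K0 by (auto simp: a_def S_def intro: sf_divide)
    moreover have "regular_at v (a i)"
    proof (cases "\<mu> i = 0")
      case False
      then have "i \<in> S" using i by (simp add: S_def)
      then show ?thesis using jmin[of i] j False by (auto simp: a_def regular_at_def v_divide S_def)
    qed (simp add: a_def)
    ultimately show "a i \<in> ?A" by simp
  qed
  have "(\<Sum>i<m. a i * z i) = (\<Sum>i<m. \<mu> i * z i) / \<mu> j"
    by (simp add: a_def sum_divide_distrib)
  then have "vanishes_at v (\<Sum>i<m. a i * z i)" using mu(3) by simp
  then have "vanishes_at v (a j)" using z(2) aA j unfolding indepC_def by (auto simp: S_def)
  then show False using j by (simp add: a_def S_def)
qed

end

context vp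
begin

lemma indepFq_zero:
  "indepC Fq m z \<Longrightarrow> \<forall>i<m. c i \<in> Fq \<Longrightarrow> vanishes_at v (\<Sum>i<m. c i * z i) \<Longrightarrow> i < m \<Longrightarrow> c i = 0"
  unfolding indepC_def using van_const by blast

lemma const_rep:
  assumes finFq: "finite Fq" and fS: "finite S" and SO: "S \<subseteq> {z. regular_at v z}"
    and Srep: "\<forall>z. regular_at v z \<longrightarrow> (\<exists>s\<in>S. vanishes_at v (z - s))"
    and deg: "place_deg Fq v = 1" and z: "regular_at v z"
  shows "\<exists>c\<in>Fq. vanishes_at v (z - c)"
proof (rule ccontr)
  assume nz: "\<not> ?thesis"
  let ?q = "card Fq"
  have q2: "?q \<ge> 2"
  proof -
    have "{0, 1} \<subseteq> Fq" using sf by (simp add: sf_0 sf_1)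
    then have "card {0, 1::'k} \<le> ?q" using finFq by (rule card_mono[rotated])
    then show ?thesis by simp
  qed
  let ?P = "\<lambda>m. \<exists>z. (\<forall>i<m. regular_at v (z i)) \<and> indepC Fq m z"
  have closed: "- (b / a) \<in> Fq" if "a \<in> Fq" "b \<in> Fq" for a b
    using that sf by (intro sf_uminus sf_divide)
  have refl: "\<exists>\<kappa>\<in>Fq. vanishes_at v (c - \<kappa>)" if "c \<in> Fq" for c using that by (intro bexI[of _ c]) auto
  have FqO: "Fq \<subseteq> {z. regular_at v z}" using reg_const by auto
  have bound: "m < card S" if hP: "?P m" for m
  proof -
    obtain zz where zz: "\<forall>i<m. regular_at v (zz i)" "indepC Fq m zz" using hP by blast
    let ?E = "\<Pi>\<^sub>E i\<in>{..<m}. Fq"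
    define g where "g c = (SOME s. s \<in> S \<and> vanishes_at v ((\<Sum>i<m. c i * zz i) - s))" for c
    have g: "g c \<in> S \<and> vanishes_at v ((\<Sum>i<m. c i * zz i) - g c)" if "c \<in> ?E" for c
    proof -
      have "regular_at v (\<Sum>i<m. c i * zz i)" using that zz(1) reg_const
        by (intro reg_sum reg_mult) (auto simp: PiE_iff)
      then show ?thesis unfolding g_def using Srep by (metis (no_types, lifting) someI_ex)
    qed
    have "inj_on g ?E"
    proof (rule inj_onI)
      fix c c' assume c: "c \<in> ?E" "c' \<in> ?E" "g c = g c'"
      have "vanishes_at v (((\<Sum>i<m. c i * zz i) - g c) - ((\<Sum>i<m. c' i * zz i) - g c'))"
        using g[OF c(1)] g[OF c(2)] by (blast intro: van_diff)
      then have "vanishes_at v (\<Sum>i<m. (c i - c' i) * zz i)"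
        using c(3) by (simp add: algebra_simps sum_subtractf)
      moreover have "\<forall>i<m. c i - c' i \<in> Fq" using c sf by (auto intro: sf_diff simp: PiE_iff)
      ultimately have "c i - c' i = 0" if "i < m" for i using indepFq_zero[OF zz(2), of "\<lambda>i. c i - c' i"] that by blast
      then show "c = c'" using c(1,2) by (intro PiE_ext[of c "{..<m}" "\<lambda>_. Fq"]) auto
    qed
    moreover have "g ` ?E \<subseteq> S" using g by auto
    ultimately have "card ?E \<le> card S" using fS by (intro card_inj_on_le) auto
    moreover have "card ?E = ?q ^ m" by (simp add: card_PiE)
    moreover have "m < 2 ^ m" by (rule less_exp)
    moreover have "(2::nat) ^ m \<le> ?q ^ m" using q2 by (rule power_mono) simp
    ultimately show ?thesis by linarith
  qed
  define z2 where "z2 i = (if i = 0 then 1 else z)" for i :: nat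
  have P2: "?P 2"
  proof (intro exI conjI)
    show "\<forall>i<2. regular_at v (z2 i)" using z by (auto simp: z2_def regular_at_def)
    show "indepC Fq 2 z2" unfolding indepC_def
    proof (intro allI impI)
      fix c :: "nat \<Rightarrow> 'k" and i :: nat
      assume cF: "\<forall>i<2. c i \<in> Fq" and van: "vanishes_at v (\<Sum>i<2. c i * z2 i)" and i: "i < 2"
      have van': "vanishes_at v (c 0 + c 1 * z)" using van by (simp add: z2_def numeral_2_eq_2)
      have c0F: "c 0 \<in> Fq" and c1F: "c 1 \<in> Fq" using cF by auto
      have c1: "c 1 = 0"
      proof (rule ccontr)
        assume c1: "c 1 \<noteq> 0"
        have "z - (- (c 0 / c 1)) = inverse (c 1) * (c 0 + c 1 * z)" using c1 by (simp add: field_simps)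
        moreover have "regular_at v (inverse (c 1))" using reg_const sf_inverse[OF sf c1F] by simp
        ultimately have "vanishes_at v (z - (- (c 0 / c 1)))" using van' by (simp add: van_mult)
        moreover have "- (c 0 / c 1) \<in> Fq" using closed c0F c1F by simp
        ultimately show False using nz by blast
      qed
      then have "c 0 = 0" using van' van_const c0F by simp
      then show "vanishes_at v (c i)" using c1 i by (auto simp: less_2_cases_iff)
    qed
  qed
  define m0 where "m0 = (GREATEST m. ?P m)"
  have bnd: "\<And>y. ?P y \<Longrightarrow> y \<le> card S" using bound less_imp_le by blast
  have Pm0: "?P m0" unfolding m0_def by (rule GreatestI_nat[of ?P 2, OF P2 bnd])
  have m0ge: "m0 \<ge> 2" unfolding m0_def by (rule Greatest_le_nat[of ?P 2, OF P2 bnd])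
  obtain z0 where z0: "\<forall>i<m0. regular_at v (z0 i)" "indepC Fq m0 z0" using Pm0 by blast
  have spans: "\<exists>\<kappa>. (\<forall>i<m0. \<kappa> i \<in> Fq) \<and> vanishes_at v (w - (\<Sum>i<m0. \<kappa> i * z0 i))"
    if w: "regular_at v w" for w
  proof (rule ccontr)
    assume nw: "\<not> ?thesis"
    have "indepC Fq (Suc m0) (z0(m0 := w))"
      by (rule extend[where K = Fq, OF FqO closed _ _ z0(2) w]) (use nw z0(1) refl in auto)
    moreover have "\<forall>i<Suc m0. regular_at v ((z0(m0 := w)) i)" using z0(1) w by (auto simp: less_Suc_eq)
    ultimately have "?P (Suc m0)" by blast
    then have "Suc m0 \<le> Greatest ?P" by (rule Greatest_le_nat[of ?P "Suc m0", OF _ bnd])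
    then have "Suc m0 \<le> m0" by (simp add: m0_def)
    then show False by simp
  qed
  define Ob where "Ob = {z. regular_at v z}"
  define \<rho> where "\<rho> = {(x, y). regular_at v x \<and> regular_at v y \<and> vanishes_at v (x - y)}"
  have R: "residue_field v = Ob // \<rho>" unfolding residue_field_def Ob_def \<rho>_def by simp
  have eqv: "equiv Ob \<rho>"
  proof (rule equivI)
    show "refl_on Ob \<rho>" unfolding refl_on_def Ob_def \<rho>_def by auto
    show "\<rho> \<subseteq> Ob \<times> Ob" unfolding Ob_def \<rho>_def by auto
    show "sym \<rho>" unfolding sym_def \<rho>_def by (auto dest: van_uminus)
    show "trans \<rho>" unfolding trans_def \<rho>_def by (auto intro: cong_trans)
  qed
  let ?E = "\<Pi>\<^sub>E i\<in>{..<m0}. Fq"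
  define \<Phi> where "\<Phi> c = \<rho> `` {\<Sum>i<m0. c i * z0 i}" for c
  have sO: "(\<Sum>i<m0. c i * z0 i) \<in> Ob" if "c \<in> ?E" for c
    using that z0(1) reg_const unfolding Ob_def by (auto intro!: reg_sum reg_mult simp: PiE_iff)
  have "bij_betw \<Phi> ?E (Ob // \<rho>)"
  proof (rule bij_betw_imageI)
    show "inj_on \<Phi> ?E"
    proof (rule inj_onI)
      fix c c' assume c: "c \<in> ?E" "c' \<in> ?E" "\<Phi> c = \<Phi> c'"
      then have "((\<Sum>i<m0. c i * z0 i), (\<Sum>i<m0. c' i * z0 i)) \<in> \<rho>"
        using equiv_class_eq_iff[OF eqv] sO by (auto simp: \<Phi>_def)
      then have "vanishes_at v (\<Sum>i<m0. (c i - c' i) * z0 i)"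
        by (simp add: \<rho>_def algebra_simps sum_subtractf)
      moreover have "\<forall>i<m0. c i - c' i \<in> Fq" using c sf by (auto intro: sf_diff simp: PiE_iff)
      ultimately have "c i - c' i = 0" if "i < m0" for i using indepFq_zero[OF z0(2), of "\<lambda>i. c i - c' i"] that by blast
      then show "c = c'" using c(1,2) by (intro PiE_ext[of c "{..<m0}" "\<lambda>_. Fq"]) auto
    qed
    show "\<Phi> ` ?E = Ob // \<rho>"
    proof
      show "\<Phi> ` ?E \<subseteq> Ob // \<rho>" using sO by (auto simp: \<Phi>_def intro: quotientI)
      show "Ob // \<rho> \<subseteq> \<Phi> ` ?E"
      proof
        fix X assume "X \<in> Ob // \<rho>"
        then obtain w where w: "w \<in> Ob" "X = \<rho> `` {w}" by (auto elim: quotientE)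
        obtain \<kappa> where k: "\<forall>i<m0. \<kappa> i \<in> Fq" "vanishes_at v (w - (\<Sum>i<m0. \<kappa> i * z0 i))"
          using spans w(1) unfolding Ob_def by blast
        define c where "c = restrict \<kappa> {..<m0}"
        have cE: "c \<in> ?E" using k(1) by (auto simp: c_def)
        have sc: "(\<Sum>i<m0. c i * z0 i) = (\<Sum>i<m0. \<kappa> i * z0 i)" by (simp add: c_def)
        have "(w, \<Sum>i<m0. c i * z0 i) \<in> \<rho>" using w(1) sO[OF cE] k(2) sc by (simp add: \<rho>_def Ob_def)
        then have "X = \<Phi> c" using w(2) equiv_class_eq_iff[OF eqv] by (simp add: \<Phi>_def)
        then show "X \<in> \<Phi> ` ?E" using cE by blast
      qed
    qed
  qed
  then have "card (residue_field v) = ?q ^ m0" using R by (simp add: bij_betw_same_card[symmetric] card_PiE)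
  then have "place_deg Fq v = m0" unfolding place_deg_def
    using q2 by (intro the_equality) (simp_all add: power_inject_exp)
  then show False using deg m0ge by simp
qed

end

lemma const_algebraic: "subfield F \<Longrightarrow> c \<in> F \<Longrightarrow> algebraic_over F c"
  unfolding algebraic_over_def
  by (intro exI[of _ "[:-c, 1:]"]) (auto simp: poly_over_def coeff_pCons sf_0 sf_1 sf_uminus split: nat.splits)

lemma key_const:
  assumes ff: "function_field Fq" and pl: "place Fq P" and deg: "place_deg Fq P = 1"
    and reg: "regular_at P z"
  shows "\<exists>c\<in>Fq. vanishes_at P (z - c)"
proof -
  have sf: "subfield Fq" and finFq: "finite Fq" and full: "\<forall>y. algebraic_over Fq y \<longrightarrow> y \<in> Fq"
    using ff by (auto simp: function_field_def)
  obtain x B where x: "\<not> algebraic_over Fq x" and B: "finite B"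
    and span: "\<forall>y. \<exists>c. (\<forall>b\<in>B. c b \<in> rat_fun_field Fq x) \<and> y = (\<Sum>b\<in>B. c b * b)"
    using ff unfolding function_field_def by blast
  interpret vp Fq P using sf pl by unfold_locales
  have x0: "x \<noteq> 0" using x const_algebraic[OF sf sf_0[OF sf]] by auto
  obtain x' where x': "\<not> algebraic_over Fq x'" "P x' \<ge> 0"
    "\<forall>y. \<exists>c. (\<forall>b\<in>B. c b \<in> rat_fun_field Fq x') \<and> y = (\<Sum>b\<in>B. c b * b)"
  proof (cases "P x \<ge> 0")
    case True then show ?thesis using that x span by blast
  next
    case False
    have "\<not> algebraic_over Fq (inverse x)"
    proof
      assume "algebraic_over Fq (inverse x)"
      then have "inverse x \<in> Fq" using full by blast
      then have "x \<in> Fq" using sf_inverse[OF sf, of "inverse x"] by simp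
      then show False using x const_algebraic[OF sf] by blast
    qed
    moreover have "P (inverse x) \<ge> 0" using False by (simp add: v_inverse)
    moreover have "\<forall>y. \<exists>c. (\<forall>b\<in>B. c b \<in> rat_fun_field Fq (inverse x)) \<and> y = (\<Sum>b\<in>B. c b * b)"
      using span RF_swap[OF sf x0] by blast
    ultimately show ?thesis using that by blast
  qed
  interpret vpx Fq P x' B using x' finFq B by unfold_locales auto
  obtain K where K: "finite K" "K \<subseteq> {z. regular_at P z}"
    "\<forall>a\<in>rat_fun_field Fq x'. regular_at P a \<longrightarrow> (\<exists>\<kappa>\<in>K. vanishes_at P (a - \<kappa>))"
    using A_reps by blast
  obtain S where S: "finite S" "S \<subseteq> {z. regular_at P z}" "\<forall>z. regular_at P z \<longrightarrow> (\<exists>s\<in>S. vanishes_at P (z - s))"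
    using finrep[OF RF_subfield[OF sf] B x'(3) K] by blast
  show ?thesis using const_rep[OF finFq S deg reg] .
qed

lemma eval_van:
  assumes "function_field Fq" "place Fq P" "place_deg Fq P = 1" "regular_at P z"
  shows "eval_at Fq P z \<in> Fq \<and> vanishes_at P (z - eval_at Fq P z)"
  unfolding eval_at_def using key_const[OF assms] by (metis (no_types, lifting) someI_ex)

lemma RR_val:
  assumes "f \<in> RR_space Fq E" "f \<noteq> 0" "place Fq v"
  shows "v f \<ge> - E v"
proof -
  have "principal_div Fq f v + E v \<ge> 0" using assms(1,2) by (simp add: RR_space_def)
  then show ?thesis using assms(3) by (simp add: principal_div_def)
qed

theorem proposition4p5:
  fixes Fq :: "'k::field set" and Pset :: "('k \<Rightarrow> int) set"
    and G H J :: "'k divisor"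
  assumes ff: "function_field Fq"
    and P_proper: "Pset \<subset> rational_places Fq"
    and divs: "is_divisor Fq G" "is_divisor Fq H" "is_divisor Fq J"
    and degs: "div_deg Fq G \<le> div_deg Fq (sum_div Pset) - 1"
              "div_deg Fq H \<le> div_deg Fq (sum_div Pset) - 1"
              "div_deg Fq J \<le> div_deg Fq (sum_div Pset) - 1"
    and disj: "(div_supp G \<union> div_supp H \<union> div_supp J) \<inter> div_supp (sum_div Pset) = {}"
    and hyp: "\<forall>f \<in> RR_space Fq J - {0}.
       RR_space Fq (\<lambda>v. div_lcm G (\<lambda>w. H w - principal_div Fq f w) v - sum_div Pset v)
       \<inter> {a + b | a b. a \<in> RR_space Fq G \<and> b \<in> RR_space Fq (\<lambda>w. H w - principal_div Fq f w)}
       = {0}"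
  shows "\<forall>f \<in> RR_space Fq J - {0}.
       AG_code Fq Pset G \<inter> AG_code Fq Pset (\<lambda>w. H w - principal_div Fq f w)
       = AG_code Fq Pset (div_gcd G (\<lambda>w. H w - principal_div Fq f w))"
proof
  fix f assume f: "f \<in> RR_space Fq J - {0}"
  define H' where "H' = (\<lambda>w. H w - principal_div Fq f w)"
  define D where "D = sum_div Pset"
  have sf: "subfield Fq" using ff by (simp add: function_field_def)
  have Pplace: "place Fq P" "place_deg Fq P = 1" if "P \<in> Pset" for P
    using P_proper that by (auto simp: rational_places_def places_def)
  have PD: "D P = 1" if "P \<in> Pset" for P using that by (simp add: D_def sum_div_def)
  have zeroP: "G P = 0" "H P = 0" "J P = 0" if "P \<in> Pset" for P
    using disj that by (auto simp: div_supp_def sum_div_def)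
  have f0: "f \<noteq> 0" and fJ: "f \<in> RR_space Fq J" using f by auto
  have vf: "P f \<ge> 0" if "P \<in> Pset" for P
    using RR_val[OF fJ f0 Pplace(1)[OF that]] zeroP[OF that] by simp
  have offplace: "G v = 0" "H v = 0" "J v = 0" "D v = 0" "principal_div Fq g v = 0" if "\<not> place Fq v" for v g
    using divs that P_proper
    by (auto simp: is_divisor_def places_def D_def sum_div_def principal_div_def rational_places_def)
  have H'P: "H' P = - P f" if "P \<in> Pset" for P
    using zeroP[OF that] Pplace[OF that] by (simp add: H'_def principal_div_def)
  have regG: "regular_at P a" if "a \<in> RR_space Fq G" "P \<in> Pset" for a P
    using RR_val[OF that(1) _ Pplace(1)[OF that(2)]] zeroP[OF that(2)] by (auto simp: regular_at_def)
  have regH: "regular_at P b" if "b \<in> RR_space Fq H'" "P \<in> Pset" for b P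
    using RR_val[OF that(1) _ Pplace(1)[OF that(2)]] H'P[OF that(2)] vf[OF that(2)] by (force simp: regular_at_def)
  have RRneg: "- b \<in> RR_space Fq E" if "b \<in> RR_space Fq E" for b E
  proof -
    have "principal_div Fq (- b) = principal_div Fq b"
    proof
      fix v show "principal_div Fq (- b) v = principal_div Fq b v"
      proof (cases "place Fq v")
        case True
        interpret vp Fq v using sf True by unfold_locales
        show ?thesis by (simp add: principal_div_def)
      qed (simp add: principal_div_def)
    qed
    then show ?thesis using that by (simp add: RR_space_def)
  qed
  show "AG_code Fq Pset G \<inter> AG_code Fq Pset H' = AG_code Fq Pset (div_gcd G H')"
  proof
    show "AG_code Fq Pset (div_gcd G H') \<subseteq> AG_code Fq Pset G \<inter> AG_code Fq Pset H'"
    proof -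
      have mono: "RR_space Fq E1 \<subseteq> RR_space Fq E2" if le: "\<And>v. E1 v \<le> E2 v" for E1 E2 :: "'k divisor"
      proof
        fix g assume g: "g \<in> RR_space Fq E1"
        show "g \<in> RR_space Fq E2"
        proof (cases "g = 0")
          case False
          have "principal_div Fq g v + E2 v \<ge> 0" for v
          proof -
            have "principal_div Fq g v + E1 v \<ge> 0" using g False unfolding RR_space_def by blast
            then show ?thesis using le[of v] by linarith
          qed
          then show ?thesis by (simp add: RR_space_def)
        qed (simp add: RR_space_def)
      qed
      have "RR_space Fq (div_gcd G H') \<subseteq> RR_space Fq G" "RR_space Fq (div_gcd G H') \<subseteq> RR_space Fq H'"
        by (rule mono, simp add: div_gcd_def)+
      then show ?thesis unfolding AG_code_def by blast
    qed
  next
    show "AG_code Fq Pset G \<inter> AG_code Fq Pset H' \<subseteq> AG_code Fq Pset (div_gcd G H')"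
    proof
      fix u assume u: "u \<in> AG_code Fq Pset G \<inter> AG_code Fq Pset H'"
      obtain a where a: "a \<in> RR_space Fq G" "u = (\<lambda>P. if P \<in> Pset then eval_at Fq P a else 0)"
        using u unfolding AG_code_def by blast
      obtain b where b: "b \<in> RR_space Fq H'" "u = (\<lambda>P. if P \<in> Pset then eval_at Fq P b else 0)"
        using u unfolding AG_code_def by blast
      have vanP: "vanishes_at P (a - b)" if P: "P \<in> Pset" for P
      proof -
        interpret vp Fq P using sf Pplace[OF P] by unfold_locales
        have e: "eval_at Fq P a = eval_at Fq P b" using fun_cong[OF trans[OF a(2)[symmetric] b(2)], of P] P by simp
        have "vanishes_at P (a - eval_at Fq P a)" using eval_van[OF ff Pplace[OF P] regG[OF a(1) P]] by simp
        moreover have "vanishes_at P (b - eval_at Fq P b)" using eval_van[OF ff Pplace[OF P] regH[OF b(1) P]] by simp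
        ultimately have "vanishes_at P ((a - eval_at Fq P a) - (b - eval_at Fq P b))" by (rule van_diff)
        then show ?thesis using e by simp
      qed
      have inL: "a - b \<in> RR_space Fq (\<lambda>v. div_lcm G H' v - D v)"
      proof (cases "a - b = 0")
        case True then show ?thesis by (simp add: RR_space_def)
      next
        case False
        have "principal_div Fq (a - b) v + (div_lcm G H' v - D v) \<ge> 0" for v
        proof (cases "place Fq v")
          case False
          then show ?thesis using offplace[OF False] by (simp add: div_lcm_def H'_def)
        next
          case True
          interpret vp Fq v using sf True by unfold_locales
          have ga: "v a \<ge> - G v" if "a \<noteq> 0" using RR_val[OF a(1) that True] .
          have hb: "v b \<ge> - H' v" if "b \<noteq> 0" using RR_val[OF b(1) that True] .
          have vab: "v (a - b) \<ge> - max (G v) (H' v)"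
          proof (cases "a = 0")
            case True then show ?thesis using hb False by simp
          next
            case a0: False
            show ?thesis
            proof (cases "b = 0")
              case True then show ?thesis using ga a0 by simp
            next
              case b0: False
              have "v (a + - b) \<ge> min (v a) (v (- b))" using v_add[of a "- b"] a0 b0 False by simp
              then show ?thesis using ga[OF a0] hb[OF b0] by simp
            qed
          qed
          show ?thesis
          proof (cases "v \<in> Pset")
            case True
            have "v (a - b) > 0" using vanP[OF True] False by (simp add: vanishes_at_def)
            moreover have "G v = 0" "H' v \<le> 0" "D v = 1" using zeroP[OF True] H'P[OF True] vf[OF True] PD[OF True] by auto
            ultimately show ?thesis using \<open>place Fq v\<close> by (simp add: principal_div_def div_lcm_def)
          next
            case False
            then have "D v = 0" by (simp add: D_def sum_div_def)
            then show ?thesis using vab \<open>place Fq v\<close> by (simp add: principal_div_def div_lcm_def)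
          qed
        qed
        then show ?thesis by (simp add: RR_space_def)
      qed
      have inS: "a - b \<in> {x + y | x y. x \<in> RR_space Fq G \<and> y \<in> RR_space Fq H'}"
      proof -
        have "a - b = a + (- b)" by simp
        then show ?thesis using a(1) RRneg[OF b(1)] by blast
      qed
      have "a - b = 0"
        using hyp[rule_format, OF f] inL inS unfolding H'_def D_def by blast
      then have ab: "a = b" by simp
      have "a \<in> RR_space Fq (div_gcd G H')"
      proof (cases "a = 0")
        case True then show ?thesis by (simp add: RR_space_def)
      next
        case False
        have "principal_div Fq a v + div_gcd G H' v \<ge> 0" for v
        proof -
          have "principal_div Fq a v + G v \<ge> 0" using a(1) False unfolding RR_space_def by blast
          moreover have "principal_div Fq a v + H' v \<ge> 0" using b(1) ab False unfolding RR_space_def by blast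
          ultimately show ?thesis unfolding div_gcd_def by linarith
        qed
        then show ?thesis by (simp add: RR_space_def)
      qed
      then show "u \<in> AG_code Fq Pset (div_gcd G H')" using a(2) unfolding AG_code_def by blast
    qed
  qed
qed

end
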